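(* Let $\alpha>0$, $\beta\ge0$, $\lambda\in[0,1]$, $p=2\alpha\lambda$, and $z\notin\operatorname{argmin}\phi$. For every $\tau\in(0,\tau_2)\cap(0,T^\lambda(z))$, $$\int_\tau^{T^\lambda(z)}\frac{\alpha(1-\lambda)}{t^{p+1}}\,dt+\int_\tau^{T^\lambda(z)}\frac{\beta\mu}{t^{p}}\,dt\le\frac{(\alpha+1)^2H(\tau)^2}{2\mu\,\tau^{p+2}\,\big(2H(\tau)-1\big)^2}.$$
   Context: Let $\phi:\mathbb{R}^n\to\mathbb{R}$ be twice continuously differentiable, $\mu$-strongly convex ($\mu>0$), with $L$-Lipschitz gradient and minimum value $\phi^*$. For $z\in\mathbb{R}^n$, $x_z$ is the unique $C^1([0,\infty))\cap C^2((0,\infty))$ solution of $\ddot x(t)+\frac{\alpha}{t}\dot x(t)+\beta\nabla^2\phi(x(t))\dot x(t)+\nabla\phi(x(t))=0$ ($t>0$), $x(0)=z$, $\dot x(0)=0$. For $\lambda\in[0,1]$: $\varphi_{z,\lambda}(t)=\frac12\frac{d}{dt}\|\dot x_z(t)\|^2+\lambda\frac{\alpha}{t}\|\dot x_z(t)\|^2$ and $T^\lambda(z)=\inf\{t>0:\varphi_{z,\lambda}(t)\le0\}$. $H(t)=1-\frac{\beta Lt}{\alpha+2}-\frac{Lt^2}{2(\alpha+3)}$ and $\tau_2=-\frac{\alpha+3}{\alpha+2}\beta+\sqrt{\left(\frac{\alpha+3}{\alpha+2}\right)^2\beta^2+\frac{\alpha+3}{L}}$ (so $H(\tau_2)=\frac12$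 and $H>\frac12$ on $[0,\tau_2)$). *)

theory Defs
  imports "HOL-Analysis.Analysis"
begin

definition strongly_convex :: "real \<Rightarrow> ('a::real_inner \<Rightarrow> real) \<Rightarrow> bool" where
  "strongly_convex \<mu> \<phi> \<longleftrightarrow> convex_on UNIV (\<lambda>x. \<phi> x - (\<mu> / 2) * (norm x)^2)"

definition H_fun :: "real \<Rightarrow> real \<Rightarrow> real \<Rightarrow> real \<Rightarrow> real" where
  "H_fun \<alpha> \<beta> L t = 1 - \<beta> * L * t / (\<alpha> + 2) - L * t^2 / (2 * (\<alpha> + 3))"

definition tau2 :: "real \<Rightarrow> real \<Rightarrow> real \<Rightarrow> real" where
  "tau2 \<alpha> \<beta> L = - ((\<alpha> + 3) / (\<alpha> + 2)) * \<beta>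
      + sqrt (((\<alpha> + 3) / (\<alpha> + 2))^2 * \<beta>^2 + (\<alpha> + 3) / L)"

definition varphi :: "real \<Rightarrow> real \<Rightarrow> (real \<Rightarrow> 'a::real_normed_vector) \<Rightarrow> real \<Rightarrow> real" where
  "varphi \<alpha> lam x' t = deriv (\<lambda>s. (norm (x' s))^2) t / 2 + lam * \<alpha> / t * (norm (x' t))^2"

text \<open>T^lambda(z) = inf {t>0. varphi(t) <= 0}, as an extended real (infinite if the set is empty).\<close>
definition T_lam :: "real \<Rightarrow> real \<Rightarrow> (real \<Rightarrow> 'a::real_normed_vector) \<Rightarrow> ereal" where
  "T_lam \<alpha> lam x' = Inf (ereal ` {t. t > 0 \<and> varphi \<alpha> lam x' t \<le> 0})"

end

theory Submission
  imports Defs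
begin


lemma dir_deriv_right:
  fixes f :: "'a::real_normed_vector \<Rightarrow> 'b::real_normed_vector"
  assumes "(f has_derivative f') (at a)"
  shows "((\<lambda>t. (f (a + t *\<^sub>R d) - f a) /\<^sub>R t) \<longlongrightarrow> f' d) (at_right 0)"
proof -
  have bl: "bounded_linear f'" using assms has_derivative_bounded_linear by blast
  have "((\<lambda>t. f (a + t *\<^sub>R d)) has_derivative (\<lambda>t. f' (t *\<^sub>R d))) (at 0 within {0<..})"
  proof (rule has_derivative_compose[of "\<lambda>t. a + t *\<^sub>R d" "\<lambda>t. t *\<^sub>R d" 0 "{0<..}" f f'])
    show "((\<lambda>t. a + t *\<^sub>R d) has_derivative (\<lambda>t. t *\<^sub>R d)) (at 0 within {0<..})"
      by (auto intro!: derivative_eq_intros)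
    show "(f has_derivative f') (at (a + 0 *\<^sub>R d))" using assms by simp
  qed
  then have "((\<lambda>y. ((f (a + y *\<^sub>R d) - f (a + 0 *\<^sub>R d)) - f' ((y - 0) *\<^sub>R d)) /\<^sub>R norm (y - 0)) \<longlongrightarrow> 0) (at 0 within {0<..})"
    unfolding has_derivative_at_within by simp
  then have "((\<lambda>y. ((f (a + y *\<^sub>R d) - f (a + 0 *\<^sub>R d)) - f' ((y - 0) *\<^sub>R d)) /\<^sub>R norm (y - 0) + f' d) \<longlongrightarrow> 0 + f' d) (at 0 within {0<..})"
    by (intro tendsto_add) auto
  then have L: "((\<lambda>y. ((f (a + y *\<^sub>R d) - f (a + 0 *\<^sub>R d)) - f' ((y - 0) *\<^sub>R d)) /\<^sub>R norm (y - 0) + f' d) \<longlongrightarrow> f' d) (at_right 0)" by simp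
  show ?thesis
  proof (rule Lim_transform_eventually[OF L])
    show "\<forall>\<^sub>F y in at_right 0. ((f (a + y *\<^sub>R d) - f (a + 0 *\<^sub>R d)) - f' ((y - 0) *\<^sub>R d)) /\<^sub>R norm (y - 0) + f' d = (f (a + y *\<^sub>R d) - f a) /\<^sub>R y"
      using eventually_at_right_less[of 0]
    proof (rule eventually_mono)
      fix y :: real assume "0 < y"
      then show "((f (a + y *\<^sub>R d) - f (a + 0 *\<^sub>R d)) - f' ((y - 0) *\<^sub>R d)) /\<^sub>R norm (y - 0) + f' d = (f (a + y *\<^sub>R d) - f a) /\<^sub>R y"
        using linear_cmul[OF bounded_linear.linear[OF bl]] by (simp add: algebra_simps)
    qed
  qed
qed

lemma grad_ineq:
  fixes \<phi> :: "'a::real_inner \<Rightarrow> real"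
  assumes grad: "\<And>y. (\<phi> has_derivative (\<lambda>h. g y \<bullet> h)) (at y)"
    and sconv: "strongly_convex \<mu> \<phi>"
  shows "\<phi> a + g a \<bullet> (b - a) + \<mu> / 2 * (norm (b - a))^2 \<le> \<phi> b"
proof -
  define \<psi> where "\<psi> x = \<phi> x - (\<mu> / 2) * (norm x)^2" for x
  have cv: "convex_on UNIV \<psi>" using sconv unfolding strongly_convex_def \<psi>_def by simp
  have d\<psi>: "(\<psi> has_derivative (\<lambda>h. g a \<bullet> h - (\<mu> / 2) * (a \<bullet> h + h \<bullet> a))) (at a)"
    unfolding \<psi>_def power2_norm_eq_inner
    by (auto intro!: derivative_eq_intros grad)
  have lim: "((\<lambda>t. (\<psi> (a + t *\<^sub>R (b - a)) - \<psi> a) /\<^sub>R t) \<longlongrightarrow> g a \<bullet> (b - a) - (\<mu> / 2) * (a \<bullet> (b - a) + (b - a) \<bullet> a)) (at_right 0)"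
    using dir_deriv_right[OF d\<psi>] by simp
  have ev: "\<forall>\<^sub>F t in at_right 0. (\<psi> (a + t *\<^sub>R (b - a)) - \<psi> a) /\<^sub>R t \<le> \<psi> b - \<psi> a"
    unfolding eventually_at_right_field
  proof (intro exI[of _ 1] conjI allI impI, simp)
    fix t :: real assume t: "0 < t" "t < 1"
    have "\<psi> ((1 - t) *\<^sub>R a + t *\<^sub>R b) \<le> (1 - t) * \<psi> a + t * \<psi> b"
      using convex_onD[OF cv, of t a b] t by simp
    moreover have "(1 - t) *\<^sub>R a + t *\<^sub>R b = a + t *\<^sub>R (b - a)" by (simp add: algebra_simps)
    ultimately have "\<psi> (a + t *\<^sub>R (b - a)) - \<psi> a \<le> t * (\<psi> b - \<psi> a)" by (simp add: algebra_simps)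
    then show "(\<psi> (a + t *\<^sub>R (b - a)) - \<psi> a) /\<^sub>R t \<le> \<psi> b - \<psi> a"
      using t by (simp add: field_simps)
  qed
  have "g a \<bullet> (b - a) - (\<mu> / 2) * (a \<bullet> (b - a) + (b - a) \<bullet> a) \<le> \<psi> b - \<psi> a"
    by (rule tendsto_upperbound[OF lim ev]) simp
  moreover have "(norm (b - a))^2 = (norm b)^2 - (norm a)^2 - (a \<bullet> (b - a) + (b - a) \<bullet> a)"
    unfolding power2_norm_eq_inner by (simp add: algebra_simps inner_commute)
  ultimately show ?thesis unfolding \<psi>_def power2_norm_eq_inner by (simp add: algebra_simps inner_commute)
qed

lemma grad_mono:
  fixes \<phi> :: "'a::real_inner \<Rightarrow> real"
  assumes grad: "\<And>y. (\<phi> has_derivative (\<lambda>h. g y \<bullet> h)) (at y)"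
    and sconv: "strongly_convex \<mu> \<phi>"
  shows "\<mu> * (norm (b - a))^2 \<le> (g b - g a) \<bullet> (b - a)"
proof -
  have 1: "\<phi> a + g a \<bullet> (b - a) + \<mu> / 2 * (norm (b - a))^2 \<le> \<phi> b" by (rule grad_ineq[OF grad sconv])
  have 2: "\<phi> b + g b \<bullet> (a - b) + \<mu> / 2 * (norm (a - b))^2 \<le> \<phi> a" by (rule grad_ineq[OF grad sconv])
  have "norm (a - b) = norm (b - a)" by (rule norm_minus_commute)
  moreover have "g b \<bullet> (a - b) = - (g b \<bullet> (b - a))" by (simp add: inner_diff_right)
  ultimately show ?thesis using 1 2 by (simp add: inner_diff_left algebra_simps)
qed

lemma hess_lower:
  fixes \<phi> :: "'a::real_inner \<Rightarrow> real"
  assumes grad: "\<And>y. (\<phi> has_derivative (\<lambda>h. g y \<bullet> h)) (at y)"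
    and sconv: "strongly_convex \<mu> \<phi>"
    and hess: "(g has_derivative Hy) (at y)"
  shows "\<mu> * (norm v)^2 \<le> Hy v \<bullet> v"
proof -
  have lim: "((\<lambda>t. ((g (y + t *\<^sub>R v) - g y) /\<^sub>R t) \<bullet> v) \<longlongrightarrow> Hy v \<bullet> v) (at_right 0)"
    by (intro tendsto_inner dir_deriv_right[OF hess] tendsto_const)
  have ev: "\<forall>\<^sub>F t in at_right 0. \<mu> * (norm v)^2 \<le> ((g (y + t *\<^sub>R v) - g y) /\<^sub>R t) \<bullet> v"
    using eventually_at_right_less[of "0::real"]
  proof (rule eventually_mono)
    fix t :: real assume t: "0 < t"
    have "\<mu> * (norm ((y + t *\<^sub>R v) - y))^2 \<le> (g (y + t *\<^sub>R v) - g y) \<bullet> ((y + t *\<^sub>R v) - y)"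
      by (rule grad_mono[OF grad sconv])
    define G where "G = g (y + t *\<^sub>R v) - g y"
    have "\<mu> * (t^2 * (norm v)^2) \<le> t * (G \<bullet> v)"
      using t \<open>\<mu> * (norm ((y + t *\<^sub>R v) - y))^2 \<le> _\<close> unfolding G_def[symmetric] by (simp add: power_mult_distrib)
    then have "t * (\<mu> * (norm v)^2 * t) \<le> t * (G \<bullet> v)" by (simp add: power2_eq_square mult_ac)
    then have "\<mu> * (norm v)^2 * t \<le> G \<bullet> v" using t by simp
    then have "\<mu> * (norm v)^2 \<le> (G \<bullet> v) / t" using t by (simp add: pos_le_divide_eq)
    moreover have "(G /\<^sub>R t) \<bullet> v = (G \<bullet> v) / t"
      by (simp add: divide_inverse_commute)
    ultimately show "\<mu> * (norm v)^2 \<le> ((g (y + t *\<^sub>R v) - g y) /\<^sub>R t) \<bullet> v"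
      unfolding G_def by simp
  qed
  show ?thesis by (rule tendsto_lowerbound[OF lim ev]) simp
qed

lemma hess_upper:
  fixes g :: "'a::real_normed_vector \<Rightarrow> 'b::real_normed_vector"
  assumes lip: "L-lipschitz_on UNIV g"
    and hess: "(g has_derivative Hy) (at y)"
  shows "norm (Hy v) \<le> L * norm v"
proof -
  have lim: "((\<lambda>t. norm ((g (y + t *\<^sub>R v) - g y) /\<^sub>R t)) \<longlongrightarrow> norm (Hy v)) (at_right 0)"
    by (intro tendsto_norm dir_deriv_right[OF hess])
  have ev: "\<forall>\<^sub>F t in at_right 0. norm ((g (y + t *\<^sub>R v) - g y) /\<^sub>R t) \<le> L * norm v"
    using eventually_at_right_less[of "0::real"]
  proof (rule eventually_mono)
    fix t :: real assume t: "0 < t"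
    have "dist (g (y + t *\<^sub>R v)) (g y) \<le> L * dist (y + t *\<^sub>R v) y"
      using lip unfolding lipschitz_on_def by blast
    then have "norm (g (y + t *\<^sub>R v) - g y) \<le> L * (t * norm v)"
      using t by (simp add: dist_norm)
    moreover have "norm ((g (y + t *\<^sub>R v) - g y) /\<^sub>R t) = norm (g (y + t *\<^sub>R v) - g y) / t"
      using t by (simp add: divide_inverse_commute)
    ultimately show "norm ((g (y + t *\<^sub>R v) - g y) /\<^sub>R t) \<le> L * norm v"
      using t by (simp add: divide_le_eq mult_ac)
  qed
  show ?thesis by (rule tendsto_upperbound[OF lim ev]) simp
qed



lemma powr_antideriv:
  fixes a s :: real
  assumes "a > 0" "s \<ge> 0"
  shows "((\<lambda>r. r powr (a - 1)) has_integral (s powr a / a)) {0..s}"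
proof -
  have "((\<lambda>r. r powr (a - 1)) has_integral ((\<lambda>r. r powr a / a) s - (\<lambda>r. r powr a / a) 0)) {0..s}"
  proof (rule fundamental_theorem_of_calculus_interior)
    show "continuous_on {0..s} (\<lambda>r. r powr a / a)"
      using assms by (intro continuous_intros continuous_on_powr') auto
    fix r assume "r \<in> {0<..<s}"
    then have r: "r > 0" by simp
    show "((\<lambda>r. r powr a / a) has_vector_derivative r powr (a - 1)) (at r)"
      unfolding has_real_derivative_iff_has_vector_derivative[symmetric]
      using r assms by (auto intro!: derivative_eq_intros)
  qed (use assms in auto)
  then show ?thesis using assms by simp
qed

lemma sq_antideriv:
  fixes B s :: real
  assumes "s \<ge> 0"
  shows "((\<lambda>r. B * r) has_integral (B * s^2 / 2)) {0..s}"
proof -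
  have "((\<lambda>r. B * r) has_integral ((\<lambda>r. B * r^2 / 2) s - (\<lambda>r. B * r^2 / 2) 0)) {0..s}"
  proof (rule fundamental_theorem_of_calculus_interior)
    show "continuous_on {0..s} (\<lambda>r. B * r^2 / 2)"
      by (intro continuous_intros) auto
    fix r assume "r \<in> {0<..<s}"
    show "((\<lambda>r. B * r^2 / 2) has_vector_derivative B * r) (at r)"
      unfolding has_real_derivative_iff_has_vector_derivative[symmetric]
      by (auto intro!: derivative_eq_intros)
  qed (use assms in auto)
  then show ?thesis by simp
qed

lemma powr_plus1: "(r::real) \<ge> 0 \<Longrightarrow> r powr (a + 1) = r powr a * r"
  by (cases "r = 0") (auto simp: powr_add)

lemma powr_plus2: "(r::real) \<ge> 0 \<Longrightarrow> r powr (a + 2) = r powr a * r^2"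
  by (cases "r = 0") (auto simp: powr_add power2_eq_square)

lemma H_mono:
  assumes "\<beta> \<ge> 0" "L \<ge> 0" "\<alpha> > 0" "0 \<le> s" "s \<le> t"
  shows "1 - H_fun \<alpha> \<beta> L s \<le> 1 - H_fun \<alpha> \<beta> L t" "0 \<le> 1 - H_fun \<alpha> \<beta> L s"
proof -
  have a: "\<beta> * L * s / (\<alpha> + 2) \<le> \<beta> * L * t / (\<alpha> + 2)"
    using assms by (intro divide_right_mono mult_left_mono) auto
  have b: "L * s^2 / (2 * (\<alpha> + 3)) \<le> L * t^2 / (2 * (\<alpha> + 3))"
    using assms by (intro divide_right_mono mult_left_mono power_mono) auto
  show "1 - H_fun \<alpha> \<beta> L s \<le> 1 - H_fun \<alpha> \<beta> L t"
    using a b unfolding H_fun_def by simp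
  show "0 \<le> 1 - H_fun \<alpha> \<beta> L s"
    using assms unfolding H_fun_def by simp
qed

lemma vel_lower:
  fixes g :: "'a::euclidean_space \<Rightarrow> 'a" and Hs :: "'a \<Rightarrow> 'a \<Rightarrow>\<^sub>L 'a"
    and x x' x'' :: "real \<Rightarrow> 'a"
  assumes alpha_pos: "\<alpha> > 0" and beta_nonneg: "\<beta> \<ge> 0" and Lnn: "L \<ge> 0"
    and Hn: "\<And>y v. norm (blinfun_apply (Hs y) v) \<le> L * norm v"
    and gL: "\<And>a b. norm (g a - g b) \<le> L * norm (a - b)"
    and gc: "continuous_on UNIV g" and hess_cont: "continuous_on UNIV Hs"
    and x_deriv: "\<And>t. t \<ge> 0 \<Longrightarrow> (x has_vector_derivative x' t) (at t within {0..})"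
    and x'_cont: "continuous_on {0..} x'"
    and x'_deriv: "\<And>t. t > 0 \<Longrightarrow> (x' has_vector_derivative x'' t) (at t)"
    and ode: "\<And>t. t > 0 \<Longrightarrow>
               x'' t + (\<alpha> / t) *\<^sub>R x' t + \<beta> *\<^sub>R blinfun_apply (Hs (x t)) (x' t) + g (x t) = 0"
    and init: "x 0 = z" "x' 0 = 0"
    and tau: "0 < \<tau>" and Hgt: "H_fun \<alpha> \<beta> L \<tau> > 1/2"
  shows "\<tau> * (norm (g z) / (\<alpha> + 1)) * (2 * H_fun \<alpha> \<beta> L \<tau> - 1) / H_fun \<alpha> \<beta> L \<tau> \<le> norm (x' \<tau>)"
proof -
  define w where "w s = \<beta> *\<^sub>R blinfun_apply (Hs (x s)) (x' s) + g (x s) - g z" for s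
  define Q where "Q s = s powr \<alpha> *\<^sub>R x' s + (s powr (\<alpha> + 1) / (\<alpha> + 1)) *\<^sub>R g z" for s
  define c where "c = norm (g z) / (\<alpha> + 1)"
  define H\<tau> where "H\<tau> = H_fun \<alpha> \<beta> L \<tau>"
  have xc: "continuous_on {0..} x"
    by (rule continuous_on_vector_derivative) (use x_deriv in auto)
  have wc: "continuous_on {0..} w"
  proof -
    have hc: "continuous_on {0..} (\<lambda>s. Hs (x s))"
      by (rule continuous_on_compose2[OF hess_cont xc]) auto
    have gxc: "continuous_on {0..} (\<lambda>s. g (x s))"
      by (rule continuous_on_compose2[OF gc xc]) auto
    show ?thesis unfolding w_def
      by (intro continuous_intros hc gxc x'_cont)
  qed
  have Qderiv: "(Q has_vector_derivative - (s powr \<alpha> *\<^sub>R w s)) (at s)" if s: "s > 0" for s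
  proof -
    have "(Q has_vector_derivative ((\<alpha> * s powr (\<alpha> - 1)) *\<^sub>R x' s + s powr \<alpha> *\<^sub>R x'' s
        + (((\<alpha> + 1) * s powr (\<alpha> + 1 - 1)) / (\<alpha> + 1)) *\<^sub>R g z)) (at s)"
      unfolding Q_def
      by (intro has_vector_derivative_add has_vector_derivative_scaleR x'_deriv s
          has_vector_derivative_const[THEN has_vector_derivative_eq_rhs]
          derivative_eq_intros refl) (use s x'_deriv alpha_pos in auto)
    moreover have "(\<alpha> * s powr (\<alpha> - 1)) *\<^sub>R x' s + s powr \<alpha> *\<^sub>R x'' s
        + (((\<alpha> + 1) * s powr (\<alpha> + 1 - 1)) / (\<alpha> + 1)) *\<^sub>R g z = - (s powr \<alpha> *\<^sub>R w s)"
    proof -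
      have e1: "x'' s = - ((\<alpha> / s) *\<^sub>R x' s) - \<beta> *\<^sub>R blinfun_apply (Hs (x s)) (x' s) - g (x s)"
        using ode[OF s] by (simp add: algebra_simps eq_neg_iff_add_eq_0)
      have e2: "s powr (\<alpha> - 1) = s powr \<alpha> / s" using s by (simp add: powr_diff)
      have e3: "((\<alpha> + 1) * s powr (\<alpha> + 1 - 1)) / (\<alpha> + 1) = s powr \<alpha>" using alpha_pos by simp
      show ?thesis unfolding e1 e2 e3 w_def
        by (simp add: algebra_simps)
    qed
    ultimately show ?thesis by simp
  qed
  have Q0: "Q 0 = 0" unfolding Q_def using init alpha_pos by simp
  have Qint: "((\<lambda>s. - (s powr \<alpha> *\<^sub>R w s)) has_integral Q t) {0..t}" if t: "t \<ge> 0" for t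
  proof -
    have "((\<lambda>s. - (s powr \<alpha> *\<^sub>R w s)) has_integral (Q t - Q 0)) {0..t}"
    proof (rule fundamental_theorem_of_calculus_interior[OF t])
      have "continuous_on {0..t} x'" using x'_cont by (rule continuous_on_subset) auto
      then show "continuous_on {0..t} Q" unfolding Q_def
        using alpha_pos by (intro continuous_intros continuous_on_powr') auto
      show "(Q has_vector_derivative - (s powr \<alpha> *\<^sub>R w s)) (at s)" if "s \<in> {0<..<t}" for s
        using Qderiv that by auto
    qed
    then show ?thesis using Q0 by simp
  qed
  obtain W where Wpos: "W > 0" and Wb: "\<And>s. s \<in> {0..\<tau>} \<Longrightarrow> norm (w s) \<le> W"
  proof -
    have "compact (w ` {0..\<tau>})"
      by (rule compact_continuous_image) (auto intro: continuous_on_subset[OF wc])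
    then have "bounded (w ` {0..\<tau>})" by (rule compact_imp_bounded)
    then show ?thesis using that unfolding bounded_pos by auto
  qed
  have spow: "s powr \<alpha> > 0" if "s > 0" for s using that by simp
  have apriori: "norm (x' t) / t \<le> (W + norm (g z)) / (\<alpha> + 1)" if t: "0 < t" "t \<le> \<tau>" for t
  proof -
    have i1: "((\<lambda>s. W * s powr (\<alpha> + 1 - 1)) has_integral W * (t powr (\<alpha> + 1) / (\<alpha> + 1))) {0..t}"
      by (intro has_integral_mult_right powr_antideriv) (use t alpha_pos in auto)
    have "norm (integral {0..t} (\<lambda>s. - (s powr \<alpha> *\<^sub>R w s))) \<le> integral {0..t} (\<lambda>s. W * s powr (\<alpha> + 1 - 1))"
    proof (rule integral_norm_bound_integral)
      show "(\<lambda>s. - (s powr \<alpha> *\<^sub>R w s)) integrable_on {0..t}" using Qint[of t] t by (auto simp: has_integral_integrable)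
      show "(\<lambda>s. W * s powr (\<alpha> + 1 - 1)) integrable_on {0..t}" using i1 by auto
      fix s assume s: "s \<in> {0..t}"
      have "norm (w s) \<le> W" using Wb s t by auto
      then show "norm (- (s powr \<alpha> *\<^sub>R w s)) \<le> W * s powr (\<alpha> + 1 - 1)"
        using s by (simp add: mult_right_mono mult.commute)
    qed
    note nb = this
    have iq: "integral {0..t} (\<lambda>s. - (s powr \<alpha> *\<^sub>R w s)) = Q t"
      by (intro integral_unique Qint) (use t in auto)
    have nQ: "norm (Q t) \<le> W * (t powr (\<alpha> + 1) / (\<alpha> + 1))"
      using nb unfolding iq integral_unique[OF i1] .
    have "t powr \<alpha> * norm (x' t) = norm (Q t - (t powr (\<alpha> + 1) / (\<alpha> + 1)) *\<^sub>R g z)"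
      using t by (simp add: Q_def)
    also have "\<dots> \<le> norm (Q t) + norm ((t powr (\<alpha> + 1) / (\<alpha> + 1)) *\<^sub>R g z)"
      by (rule norm_triangle_ineq4)
    also have "\<dots> \<le> W * (t powr (\<alpha> + 1) / (\<alpha> + 1)) + (t powr (\<alpha> + 1) / (\<alpha> + 1)) * norm (g z)"
      using nQ alpha_pos by simp
    also have "\<dots> = t powr \<alpha> * (t * ((W + norm (g z)) / (\<alpha> + 1)))"
      using powr_plus1[of t \<alpha>] t by (simp add: add_divide_distrib distrib_left distrib_right mult_ac)
    finally have "norm (x' t) \<le> t * ((W + norm (g z)) / (\<alpha> + 1))"
      using mult_le_cancel_left_pos[OF spow[OF t(1)]] by blast
    then show ?thesis using t by (simp add: divide_le_eq mult.commute)
  qed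
  define B where "B = Sup ((\<lambda>s. norm (x' s) / s) ` {0<..\<tau>})"
  have bdd: "bdd_above ((\<lambda>s. norm (x' s) / s) ` {0<..\<tau>})"
    using apriori by (intro bdd_aboveI2[where M="(W + norm (g z)) / (\<alpha> + 1)"]) auto
  have Bup: "norm (x' s) / s \<le> B" if "s \<in> {0<..\<tau>}" for s
    unfolding B_def using bdd that by (rule cSUP_upper2) simp
  have B0: "0 \<le> B" using Bup[of \<tau>] tau by (meson divide_nonneg_nonneg greaterThanAtMost_iff norm_ge_zero order_refl order_trans less_imp_le)
  have B1: "norm (x' r) \<le> B * r" if r: "0 \<le> r" "r \<le> \<tau>" for r
  proof (cases "r = 0")
    case True then show ?thesis using init by simp
  next
    case False
    then have "norm (x' r) / r \<le> B" using Bup r by auto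
    then show ?thesis using False r by (simp add: divide_le_eq)
  qed
  have B2: "norm (x s - z) \<le> B * s^2 / 2" if s: "0 \<le> s" "s \<le> \<tau>" for s
  proof -
    have h1: "(x' has_integral (x s - x 0)) {0..s}"
      by (rule fundamental_theorem_of_calculus[OF s(1)])
         (auto intro: has_vector_derivative_within_subset[OF x_deriv])
    then have "norm (integral {0..s} x') \<le> integral {0..s} (\<lambda>r. B * r)"
      using sq_antideriv[OF s(1), of B] B1 s
      by (intro integral_norm_bound_integral) (auto simp: has_integral_integrable)
    then show ?thesis
      unfolding integral_unique[OF h1] integral_unique[OF sq_antideriv[OF s(1), of B]] init(1) .
  qed
  have B3: "norm (w r) \<le> \<beta> * L * B * r + L * B * r^2 / 2" if r: "0 \<le> r" "r \<le> \<tau>" for r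
  proof -
    have "norm (w r) \<le> norm (\<beta> *\<^sub>R blinfun_apply (Hs (x r)) (x' r)) + norm (g (x r) - g z)"
      unfolding w_def using norm_triangle_ineq[of "\<beta> *\<^sub>R blinfun_apply (Hs (x r)) (x' r)" "g (x r) - g z"]
      by (simp add: algebra_simps)
    also have "\<dots> \<le> \<beta> * (L * norm (x' r)) + L * norm (x r - z)"
      using Hn[of "x r" "x' r"] gL[of "x r" z] beta_nonneg by (intro add_mono) (auto intro: mult_left_mono)
    also have "\<dots> \<le> \<beta> * (L * (B * r)) + L * (B * r^2 / 2)"
      using B1[OF r] B2[OF r] beta_nonneg Lnn
      by (intro add_mono mult_left_mono) auto
    finally show ?thesis by (simp add: mult_ac)
  qed
  have B4: "norm (Q s) \<le> s powr (\<alpha> + 1) * (B * (1 - H_fun \<alpha> \<beta> L s))" if s: "0 < s" "s \<le> \<tau>" for s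
  proof -
    have i2: "((\<lambda>r. \<beta> * L * B * r powr (\<alpha> + 2 - 1) + L * B / 2 * r powr (\<alpha> + 3 - 1)) has_integral
        (\<beta> * L * B * (s powr (\<alpha> + 2) / (\<alpha> + 2)) + L * B / 2 * (s powr (\<alpha> + 3) / (\<alpha> + 3)))) {0..s}"
      by (intro has_integral_add has_integral_mult_right powr_antideriv) (use s alpha_pos in auto)
    have "norm (integral {0..s} (\<lambda>s. - (s powr \<alpha> *\<^sub>R w s))) \<le>
        integral {0..s} (\<lambda>r. \<beta> * L * B * r powr (\<alpha> + 2 - 1) + L * B / 2 * r powr (\<alpha> + 3 - 1))"
    proof (rule integral_norm_bound_integral)
      show "(\<lambda>s. - (s powr \<alpha> *\<^sub>R w s)) integrable_on {0..s}" using Qint[of s] s by (auto simp: has_integral_integrable)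
      show "(\<lambda>r. \<beta> * L * B * r powr (\<alpha> + 2 - 1) + L * B / 2 * r powr (\<alpha> + 3 - 1)) integrable_on {0..s}"
        using i2 by (auto simp: has_integral_integrable)
      fix r assume r: "r \<in> {0..s}"
      then have r0: "0 \<le> r" "r \<le> \<tau>" using s by auto
      have "norm (- (r powr \<alpha> *\<^sub>R w r)) = r powr \<alpha> * norm (w r)" using r0 by simp
      also have "\<dots> \<le> r powr \<alpha> * (\<beta> * L * B * r + L * B * r^2 / 2)"
        using B3[OF r0] by (intro mult_left_mono) auto
      also have "\<dots> = \<beta> * L * B * r powr (\<alpha> + 2 - 1) + L * B / 2 * r powr (\<alpha> + 3 - 1)"
      proof -
        have "r powr (\<alpha> + 2 - 1) = r powr \<alpha> * r" using powr_plus1[OF r0(1), of \<alpha>] by (simp add: add.commute)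
        moreover have "r powr (\<alpha> + 3 - 1) = r powr \<alpha> * r^2" using powr_plus2[OF r0(1), of \<alpha>] by (simp add: add.commute)
        ultimately show ?thesis by (simp add: algebra_simps)
      qed
      finally show "norm (- (r powr \<alpha> *\<^sub>R w r)) \<le> \<beta> * L * B * r powr (\<alpha> + 2 - 1) + L * B / 2 * r powr (\<alpha> + 3 - 1)" .
    qed
    moreover have iq: "integral {0..s} (\<lambda>s. - (s powr \<alpha> *\<^sub>R w s)) = Q s"
      by (intro integral_unique Qint) (use s in auto)
    ultimately have "norm (Q s) \<le> \<beta> * L * B * (s powr (\<alpha> + 2) / (\<alpha> + 2)) + L * B / 2 * (s powr (\<alpha> + 3) / (\<alpha> + 3))"
      unfolding integral_unique[OF i2] iq by simp
    also have "\<dots> = s powr (\<alpha> + 1) * (B * (1 - H_fun \<alpha> \<beta> L s))"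
    proof -
      have "s powr (\<alpha> + 2) = s powr (\<alpha> + 1) * s" using powr_plus1[of s "\<alpha> + 1"] s by (simp add: add.assoc)
      moreover have "s powr (\<alpha> + 3) = s powr (\<alpha> + 1) * s^2" using powr_plus2[of s "\<alpha> + 1"] s by (simp add: add.assoc)
      moreover have "1 - H_fun \<alpha> \<beta> L s = \<beta> * L * s / (\<alpha> + 2) + L * s^2 / (2 * (\<alpha> + 3))"
        by (simp add: H_fun_def)
      ultimately show ?thesis by (simp add: distrib_left mult_ac)
    qed
    finally show ?thesis .
  qed
  have Hle: "0 \<le> 1 - H\<tau>" "1 - H_fun \<alpha> \<beta> L s \<le> 1 - H\<tau>" if "0 \<le> s" "s \<le> \<tau>" for s
    using H_mono[OF beta_nonneg Lnn alpha_pos, of s \<tau>] that unfolding H\<tau>_def by auto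
  have B5: "norm (x' s + (s / (\<alpha> + 1)) *\<^sub>R g z) \<le> s * (B * (1 - H\<tau>))" if s: "0 < s" "s \<le> \<tau>" for s
  proof -
    have "Q s = s powr \<alpha> *\<^sub>R (x' s + (s / (\<alpha> + 1)) *\<^sub>R g z)"
      unfolding Q_def using powr_plus1[of s \<alpha>] s by (simp add: algebra_simps)
    then have "s powr \<alpha> * norm (x' s + (s / (\<alpha> + 1)) *\<^sub>R g z) \<le> s powr (\<alpha> + 1) * (B * (1 - H_fun \<alpha> \<beta> L s))"
      using B4[OF s] s by simp
    also have "\<dots> = s powr \<alpha> * (s * (B * (1 - H_fun \<alpha> \<beta> L s)))"
      using powr_plus1[of s \<alpha>] s by simp
    finally have "norm (x' s + (s / (\<alpha> + 1)) *\<^sub>R g z) \<le> s * (B * (1 - H_fun \<alpha> \<beta> L s))"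
      using mult_le_cancel_left_pos[OF spow[OF s(1)]] by blast
    also have "\<dots> \<le> s * (B * (1 - H\<tau>))"
      using Hle[of s] s B0 by (intro mult_left_mono) auto
    finally show ?thesis .
  qed
  have B7: "norm (x' s) / s \<le> c + B * (1 - H\<tau>)" if s: "0 < s" "s \<le> \<tau>" for s
  proof -
    have "norm (x' s) \<le> norm (x' s + (s / (\<alpha> + 1)) *\<^sub>R g z) + norm ((s / (\<alpha> + 1)) *\<^sub>R g z)"
      using norm_triangle_ineq4[of "x' s + (s / (\<alpha> + 1)) *\<^sub>R g z" "(s / (\<alpha> + 1)) *\<^sub>R g z"] by simp
    also have "\<dots> \<le> s * (B * (1 - H\<tau>)) + s * c"
      using B5[OF s] s alpha_pos unfolding c_def by simp
    also have "\<dots> = (c + B * (1 - H\<tau>)) * s" by (simp add: algebra_simps)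
    finally show ?thesis using s by (simp add: divide_le_eq)
  qed
  have B8: "B \<le> c + B * (1 - H\<tau>)"
  proof -
    have "(SUP s\<in>{0<..\<tau>}. norm (x' s) / s) \<le> c + B * (1 - H\<tau>)"
      using tau B7 by (intro cSUP_least) auto
    then show ?thesis by (simp add: B_def)
  qed
  have Hpos: "H\<tau> > 0" using Hgt unfolding H\<tau>_def by simp
  have B9: "B \<le> c / H\<tau>" using B8 Hpos by (simp add: pos_le_divide_eq algebra_simps)
  have "\<tau> * c - \<tau> * (B * (1 - H\<tau>)) \<le> norm (x' \<tau>)"
  proof -
    have "\<tau> * c = norm ((\<tau> / (\<alpha> + 1)) *\<^sub>R g z)" unfolding c_def using tau alpha_pos by simp
    also have "\<dots> \<le> norm (x' \<tau> + (\<tau> / (\<alpha> + 1)) *\<^sub>R g z) + norm (x' \<tau>)"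
      using norm_triangle_ineq4[of "x' \<tau> + (\<tau> / (\<alpha> + 1)) *\<^sub>R g z" "x' \<tau>"] by simp
    also have "\<dots> \<le> \<tau> * (B * (1 - H\<tau>)) + norm (x' \<tau>)"
      using B5[OF tau order_refl] by simp
    finally show ?thesis by simp
  qed
  moreover have "\<tau> * (B * (1 - H\<tau>)) \<le> \<tau> * (c / H\<tau> * (1 - H\<tau>))"
    using B9 Hle[of 0] tau by (intro mult_left_mono mult_right_mono) auto
  moreover have "\<tau> * c - \<tau> * (c / H\<tau> * (1 - H\<tau>)) = \<tau> * c * (2 * H\<tau> - 1) / H\<tau>"
    using Hpos by (simp add: field_simps)
  ultimately have "\<tau> * c * (2 * H\<tau> - 1) / H\<tau> \<le> norm (x' \<tau>)"
    by (metis (no_types, opaque_lifting) diff_left_mono order_trans)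
  then show ?thesis by (simp only: c_def H\<tau>_def)
qed



lemma seq_exists:
  fixes T :: ereal
  assumes tT: "ereal \<tau> < T"
  obtains tn :: "nat \<Rightarrow> real" where "incseq tn" "\<And>n. \<tau> \<le> tn n" "\<And>n. ereal (tn n) < T"
    "\<And>s. \<tau> \<le> s \<Longrightarrow> ereal s < T \<Longrightarrow> \<exists>n. s \<le> tn n"
proof (cases T)
  case PInf
  show ?thesis
  proof (rule that[of "\<lambda>n. \<tau> + real n"])
    show "incseq (\<lambda>n. \<tau> + real n)" by (auto simp: incseq_def)
    show "\<And>n. \<tau> \<le> \<tau> + real n" by simp
    show "\<And>n. ereal (\<tau> + real n) < T" using PInf by simp
    fix s assume "\<tau> \<le> s"
    obtain n where "s - \<tau> \<le> real n" using real_arch_simple by blast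
    then show "\<exists>n. s \<le> \<tau> + real n" by (intro exI[of _ n]) simp
  qed
next
  case MInf then show ?thesis using tT by simp
next
  case (real r)
  then have r: "\<tau> < r" using tT by simp
  show ?thesis
  proof (rule that[of "\<lambda>n. r - (r - \<tau>) / real (Suc n)"])
    show "incseq (\<lambda>n. r - (r - \<tau>) / real (Suc n))"
      unfolding incseq_def using r by (auto intro!: divide_left_mono simp: frac_le)
    show "\<And>n. \<tau> \<le> r - (r - \<tau>) / real (Suc n)"
      using r by (auto simp: field_simps intro: mult_right_mono)
    show "\<And>n. ereal (r - (r - \<tau>) / real (Suc n)) < T"
      using r real by simp
    fix s assume s: "\<tau> \<le> s" "ereal s < T"
    then have sr: "s < r" using real by simp
    obtain n where n: "(r - \<tau>) / (r - s) \<le> real n" using real_arch_simple by blast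
    have "(r - \<tau>) / real (Suc n) \<le> r - s"
    proof -
      have "(r - \<tau>) \<le> real n * (r - s)" using n sr by (simp add: divide_le_eq)
      also have "\<dots> \<le> real (Suc n) * (r - s)" using sr by (intro mult_right_mono) auto
      finally show ?thesis by (simp add: divide_le_eq mult.commute)
    qed
    then show "\<exists>n. s \<le> r - (r - \<tau>) / real (Suc n)" by (intro exI[of _ n]) simp
  qed
qed

lemma nn_final:
  fixes h :: "real \<Rightarrow> real" and T :: ereal
  assumes tT: "ereal \<tau> < T" and hm: "h \<in> borel_measurable borel"
    and hc: "continuous_on {\<tau>..} h" and hnn: "\<And>t. \<tau> \<le> t \<Longrightarrow> 0 \<le> h t"
    and bound: "\<And>t'. \<tau> \<le> t' \<Longrightarrow> ereal t' < T \<Longrightarrow> integral {\<tau>..t'} h \<le> Bd"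
  shows "(\<integral>\<^sup>+ t \<in> {t. \<tau> \<le> t \<and> ereal t < T}. ennreal (h t) \<partial>lborel) \<le> ennreal Bd"
proof -
  obtain tn :: "nat \<Rightarrow> real" where inc: "incseq tn" and tn1: "\<And>n. \<tau> \<le> tn n"
    and tn2: "\<And>n. ereal (tn n) < T" and cover: "\<And>s. \<tau> \<le> s \<Longrightarrow> ereal s < T \<Longrightarrow> \<exists>n. s \<le> tn n"
    using seq_exists[OF tT] by blast
  define S where "S = {t. \<tau> \<le> t \<and> ereal t < T}"
  define f where "f n t = ennreal (h t) * indicator {\<tau>..tn n} t" for n t
  have finc: "incseq f"
  proof (rule incseq_SucI, rule le_funI)
    fix n t
    have "indicator {\<tau>..tn n} t \<le> (indicator {\<tau>..tn (Suc n)} t :: ennreal)"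
      using inc[unfolded incseq_def, rule_format, of n "Suc n"] by (auto simp: indicator_def)
    then show "f n t \<le> f (Suc n) t" unfolding f_def by (intro mult_left_mono) auto
  qed
  have fm: "f n \<in> borel_measurable lborel" for n unfolding f_def using hm by measurable
  have sup: "(SUP n. f n t) = ennreal (h t) * indicator S t" for t
  proof (cases "t \<in> S")
    case True
    then obtain n where n: "t \<le> tn n" using cover unfolding S_def by blast
    have "f n t = ennreal (h t)" using n True unfolding f_def S_def by simp
    moreover have "f m t \<le> ennreal (h t)" for m unfolding f_def by (simp add: indicator_def)
    ultimately have "(SUP n. f n t) = ennreal (h t)"
      by (intro antisym SUP_least) (auto intro!: SUP_upper2[of n])
    then show ?thesis using True by simp
  next
    case False
    have "f n t = 0" for n
    proof -
      have "t \<notin> {\<tau>..tn n}"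
      proof
        assume "t \<in> {\<tau>..tn n}"
        then have "ereal t \<le> ereal (tn n)" by simp
        then have "ereal t < T" using tn2[of n] by (rule le_less_trans)
        then show False using False \<open>t \<in> {\<tau>..tn n}\<close> unfolding S_def by simp
      qed
      then show ?thesis unfolding f_def by simp
    qed
    then show ?thesis using False by simp
  qed
  have "(\<integral>\<^sup>+ t \<in> S. ennreal (h t) \<partial>lborel) = (\<integral>\<^sup>+ t. (SUP n. f n t) \<partial>lborel)"
    using sup by simp
  also have "\<dots> = (SUP n. integral\<^sup>N lborel (f n))"
    by (rule nn_integral_monotone_convergence_SUP[OF finc fm])
  also have "\<dots> \<le> ennreal Bd"
  proof (rule SUP_least)
    fix n
    have hi: "(h has_integral integral {\<tau>..tn n} h) {\<tau>..tn n}"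
      using integrable_continuous_interval[OF continuous_on_subset[OF hc, of "{\<tau>..tn n}"]]
      by (auto simp: has_integral_integral)
    have "integral\<^sup>N lborel (f n) = ennreal (integral {\<tau>..tn n} h)"
      unfolding f_def by (rule nn_integral_has_integral_lebesgue'[OF _ hi]) (use hnn in auto)
    also have "\<dots> \<le> ennreal Bd" using bound[OF tn1 tn2] by (rule ennreal_leI)
    finally show "integral\<^sup>N lborel (f n) \<le> ennreal Bd" .
  qed
  finally show ?thesis unfolding S_def .
qed



theorem mainTheorem9:
  fixes \<phi> :: "'a::euclidean_space \<Rightarrow> real"
    and g :: "'a \<Rightarrow> 'a"
    and Hs :: "'a \<Rightarrow> 'a \<Rightarrow>\<^sub>L 'a"
    and x x' x'' :: "real \<Rightarrow> 'a"
    and z :: 'a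
    and \<mu> L \<alpha> \<beta> lam \<tau> :: real
  assumes grad: "\<And>y. (\<phi> has_derivative (\<lambda>h. g y \<bullet> h)) (at y)"
    and hess: "\<And>y. (g has_derivative blinfun_apply (Hs y)) (at y)"
    and hess_cont: "continuous_on UNIV Hs"
    and mu_pos: "\<mu> > 0"
    and sconv: "strongly_convex \<mu> \<phi>"
    and lip: "L-lipschitz_on UNIV g"
    and alpha_pos: "\<alpha> > 0" and beta_nonneg: "\<beta> \<ge> 0"
    and lam_range: "0 \<le> lam" "lam \<le> 1"
    and x_deriv: "\<And>t. t \<ge> 0 \<Longrightarrow> (x has_vector_derivative x' t) (at t within {0..})"
    and x'_cont: "continuous_on {0..} x'"
    and x'_deriv: "\<And>t. t > 0 \<Longrightarrow> (x' has_vector_derivative x'' t) (at t)"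
    and x''_cont: "continuous_on {0<..} x''"
    and ode: "\<And>t. t > 0 \<Longrightarrow>
               x'' t + (\<alpha> / t) *\<^sub>R x' t + \<beta> *\<^sub>R blinfun_apply (Hs (x t)) (x' t) + g (x t) = 0"
    and init: "x 0 = z" "x' 0 = 0"
    and not_min: "\<exists>y. \<phi> y < \<phi> z"
    and tau: "0 < \<tau>" "\<tau> < tau2 \<alpha> \<beta> L" "ereal \<tau> < T_lam \<alpha> lam x'"
  shows "(\<integral>\<^sup>+ t \<in> {t. \<tau> \<le> t \<and> ereal t < T_lam \<alpha> lam x'}.
            ennreal (\<alpha> * (1 - lam) / t powr (2 * \<alpha> * lam + 1)) \<partial>lborel)
       + (\<integral>\<^sup>+ t \<in> {t. \<tau> \<le> t \<and> ereal t < T_lam \<alpha> lam x'}.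
            ennreal (\<beta> * \<mu> / t powr (2 * \<alpha> * lam)) \<partial>lborel)
       \<le> ennreal ((\<alpha> + 1)^2 * (H_fun \<alpha> \<beta> L \<tau>)^2
            / (2 * \<mu> * \<tau> powr (2 * \<alpha> * lam + 2) * (2 * H_fun \<alpha> \<beta> L \<tau> - 1)^2))"
proof -
  define T where "T = T_lam \<alpha> lam x'"
  define p where "p = 2 * \<alpha> * lam"
  define HT where "HT = H_fun \<alpha> \<beta> L \<tau>"
  have L0: "L \<ge> 0" using lip unfolding lipschitz_on_def by simp
  have Lpos: "L > 0"
  proof (rule ccontr)
    assume "\<not> L > 0" then have "L = 0" using L0 by simp
    then have "tau2 \<alpha> \<beta> L = 0" unfolding tau2_def using alpha_pos beta_nonneg
      by (simp add: real_sqrt_mult)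
    then show False using tau by simp
  qed
  have HT: "HT > 1/2"
  proof -
    define a where "a = (\<alpha> + 3) / (\<alpha> + 2)"
    have a0: "a > 0" unfolding a_def using alpha_pos by simp
    have "\<tau> + a * \<beta> < sqrt (a^2 * \<beta>^2 + (\<alpha> + 3) / L)"
      using tau(2) unfolding tau2_def a_def by simp
    moreover have "0 \<le> \<tau> + a * \<beta>" using tau a0 beta_nonneg by simp
    ultimately have "(\<tau> + a * \<beta>)^2 < (sqrt (a^2 * \<beta>^2 + (\<alpha> + 3) / L))^2"
      by (intro power_strict_mono) auto
    also have "\<dots> = a^2 * \<beta>^2 + (\<alpha> + 3) / L" using Lpos alpha_pos by simp
    finally have "\<tau>^2 + 2 * a * \<beta> * \<tau> < (\<alpha> + 3) / L" by (simp add: power2_eq_square algebra_simps)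
    then have "L * \<tau>^2 + 2 * a * \<beta> * \<tau> * L < \<alpha> + 3" using Lpos by (simp add: pos_less_divide_eq algebra_simps)
    then have "L * \<tau>^2 * (\<alpha> + 2) + 2 * (\<alpha> + 3) * \<beta> * \<tau> * L < (\<alpha> + 3) * (\<alpha> + 2)"
      unfolding a_def using alpha_pos by (simp add: field_simps)
    note ineq = this
    define u where "u = \<beta> * L * \<tau> / (\<alpha> + 2)"
    define v where "v = L * \<tau>^2 / (2 * (\<alpha> + 3))"
    have u: "u * (\<alpha> + 2) = \<beta> * L * \<tau>" unfolding u_def using alpha_pos by simp
    have v: "v * (2 * (\<alpha> + 3)) = L * \<tau>^2" unfolding v_def using alpha_pos by simp
    have "(u + v) * (2 * ((\<alpha> + 3) * (\<alpha> + 2))) = 2 * (\<alpha> + 3) * (u * (\<alpha> + 2)) + (\<alpha> + 2) * (v * (2 * (\<alpha> + 3)))"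
      by (simp add: algebra_simps)
    also have "\<dots> = 2 * (\<alpha> + 3) * \<beta> * \<tau> * L + L * \<tau>^2 * (\<alpha> + 2)" unfolding u v by (simp add: algebra_simps)
    finally have "(u + v) * (2 * ((\<alpha> + 3) * (\<alpha> + 2))) < 1 / 2 * (2 * ((\<alpha> + 3) * (\<alpha> + 2)))"
      using ineq by simp
    then have "u + v < 1 / 2" using alpha_pos by (simp only: mult_less_cancel_right) simp
    then show ?thesis unfolding HT_def H_fun_def u_def v_def by simp
  qed
  have gL: "norm (g a - g b) \<le> L * norm (a - b)" for a b
    using lip unfolding lipschitz_on_def by (simp add: dist_norm)
  have gc: "continuous_on UNIV g" using lip by (rule lipschitz_on_continuous_on)
  have Hn: "norm (blinfun_apply (Hs y) v) \<le> L * norm v" for y v by (rule hess_upper[OF lip hess])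
  have Hm: "\<mu> * (norm v)^2 \<le> blinfun_apply (Hs y) v \<bullet> v" for y v by (rule hess_lower[OF grad sconv hess])
  have vel: "\<tau> * (norm (g z) / (\<alpha> + 1)) * (2 * HT - 1) / HT \<le> norm (x' \<tau>)"
    unfolding HT_def
    by (rule vel_lower[OF alpha_pos beta_nonneg L0 Hn gL gc hess_cont x_deriv x'_cont x'_deriv ode init tau(1)])
       (use HT HT_def in auto)
  have gz: "g z \<noteq> 0"
  proof
    assume g0: "g z = 0"
    obtain y where y: "\<phi> y < \<phi> z" using not_min by blast
    have "\<phi> z + g z \<bullet> (y - z) + \<mu> / 2 * (norm (y - z))^2 \<le> \<phi> y" by (rule grad_ineq[OF grad sconv])
    then show False using g0 y mu_pos by (smt (verit) divide_nonneg_nonneg inner_zero_left mult_nonneg_nonneg zero_le_power2)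
  qed
  have gap: "\<phi> z - \<phi> y \<le> (norm (g z))^2 / (2 * \<mu>)" for y
  proof -
    have i: "\<phi> z + g z \<bullet> (y - z) + \<mu> / 2 * (norm (y - z))^2 \<le> \<phi> y" by (rule grad_ineq[OF grad sconv])
    have cs: "- (g z \<bullet> (y - z)) \<le> norm (g z) * norm (y - z)"
      using norm_cauchy_schwarz[of "- g z" "y - z"] by simp
    define G where "G = norm (g z)"
    define d where "d = norm (y - z)"
    have "(norm (g z))^2 / (2 * \<mu>) - (G * d - \<mu> / 2 * d^2) = (G - \<mu> * d)^2 / (2 * \<mu>)"
      unfolding G_def using mu_pos by (simp add: field_simps power2_eq_square)
    moreover have "0 \<le> (G - \<mu> * d)^2 / (2 * \<mu>)" using mu_pos by simp
    ultimately show ?thesis using i cs unfolding G_def d_def by linarith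
  qed
  have varpos: "varphi \<alpha> lam x' t > 0" if t: "0 < t" "ereal t < T" for t
  proof (rule ccontr)
    assume "\<not> varphi \<alpha> lam x' t > 0"
    then have "ereal t \<in> ereal ` {t. t > 0 \<and> varphi \<alpha> lam x' t \<le> 0}" using t by auto
    then have "T \<le> ereal t" unfolding T_def T_lam_def by (rule Inf_lower)
    then show False using t by simp
  qed
  have dnorm: "((\<lambda>s. (norm (x' s))^2) has_real_derivative 2 * (x'' t \<bullet> x' t)) (at t)" if t: "0 < t" for t
  proof -
    have "((\<lambda>s. x' s \<bullet> x' s) has_derivative (\<lambda>h. x' t \<bullet> (h *\<^sub>R x'' t) + (h *\<^sub>R x'' t) \<bullet> x' t)) (at t)"
      using x'_deriv[OF t] unfolding has_vector_derivative_def
      by (auto intro!: derivative_eq_intros)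
    moreover have "(\<lambda>h. x' t \<bullet> (h *\<^sub>R x'' t) + (h *\<^sub>R x'' t) \<bullet> x' t) = (*) (2 * (x'' t \<bullet> x' t))"
      by (auto simp: fun_eq_iff inner_commute algebra_simps)
    ultimately show ?thesis unfolding has_field_derivative_def power2_norm_eq_inner by simp
  qed
  have varphi_eq: "varphi \<alpha> lam x' t = x'' t \<bullet> x' t + lam * \<alpha> / t * (norm (x' t))^2" if t: "0 < t" for t
    unfolding varphi_def using DERIV_imp_deriv[OF dnorm[OF t]] by simp
  have K1: "((1 - lam) * \<alpha> / t + \<beta> * \<mu>) * (norm (x' t))^2 \<le> - (g (x t) \<bullet> x' t)"
    if t: "0 < t" "ereal t < T" for t
  proof -
    define N where "N = (norm (x' t))^2"
    define A where "A = blinfun_apply (Hs (x t)) (x' t) \<bullet> x' t"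
    define G where "G = g (x t) \<bullet> x' t"
    define X where "X = x'' t \<bullet> x' t"
    have e: "x'' t = - ((\<alpha> / t) *\<^sub>R x' t) - \<beta> *\<^sub>R blinfun_apply (Hs (x t)) (x' t) - g (x t)"
      using ode[OF t(1)] by (simp add: algebra_simps eq_neg_iff_add_eq_0)
    have X: "X = - (\<alpha> / t * N) - \<beta> * A - G"
      unfolding X_def N_def A_def G_def e by (simp add: inner_diff_left power2_norm_eq_inner)
    have v: "X + lam * \<alpha> / t * N > 0" using varpos[OF t] varphi_eq[OF t(1)] unfolding X_def N_def by simp
    have h: "\<beta> * (\<mu> * N) \<le> \<beta> * A" unfolding N_def A_def using Hm beta_nonneg by (intro mult_left_mono) auto
    have "((1 - lam) * \<alpha> / t + \<beta> * \<mu>) * N = \<alpha> / t * N - lam * \<alpha> / t * N + \<beta> * (\<mu> * N)"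
      by (simp add: algebra_simps diff_divide_distrib)
    then have "((1 - lam) * \<alpha> / t + \<beta> * \<mu>) * N \<le> - G" using X v h by linarith
    then show ?thesis unfolding N_def G_def .
  qed
  define E where "E s = \<phi> (x s)" for s
  have Ederiv: "(E has_real_derivative (g (x s) \<bullet> x' s)) (at s within {0..})" if s: "0 \<le> s" for s
  proof -
    have "((\<lambda>s. \<phi> (x s)) has_derivative (\<lambda>h. g (x s) \<bullet> (h *\<^sub>R x' s))) (at s within {0..})"
      by (rule has_derivative_compose[OF x_deriv[OF s, unfolded has_vector_derivative_def] grad])
    moreover have "(\<lambda>h. g (x s) \<bullet> (h *\<^sub>R x' s)) = (*) (g (x s) \<bullet> x' s)"
      by (auto simp: fun_eq_iff)
    ultimately show ?thesis unfolding has_field_derivative_def E_def by simp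
  qed
  have Efund: "((\<lambda>s. g (x s) \<bullet> x' s) has_integral (E b - E a)) {a..b}" if ab: "0 \<le> a" "a \<le> b" for a b
    by (rule fundamental_theorem_of_calculus[OF ab(2)])
       (use ab in \<open>auto intro!: has_vector_derivative_within_subset[OF Ederiv[unfolded has_real_derivative_iff_has_vector_derivative]]\<close>)
  have Enonpos: "g (x s) \<bullet> x' s \<le> 0" if s: "0 \<le> s" "ereal s < T" for s
  proof (cases "s = 0")
    case True then show ?thesis using init by simp
  next
    case False
    then have s0: "0 < s" using s by simp
    have a1: "0 \<le> (1 - lam) * \<alpha> / s" using lam_range alpha_pos s0 by simp
    have a2: "0 \<le> \<beta> * \<mu>" using beta_nonneg mu_pos by simp
    have "0 \<le> ((1 - lam) * \<alpha> / s + \<beta> * \<mu>) * (norm (x' s))^2"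
      by (rule mult_nonneg_nonneg[OF add_nonneg_nonneg[OF a1 a2] zero_le_power2])
    then show ?thesis using K1[OF s0 s(2)] by linarith
  qed
  have Etau: "E \<tau> \<le> \<phi> z"
  proof -
    have le: "g (x s) \<bullet> x' s \<le> 0" if "s \<in> {0..\<tau>}" for s
    proof -
      have "ereal s \<le> ereal \<tau>" using that by simp
      then have "ereal s < T" using tau(3) unfolding T_def by (rule le_less_trans)
      then show ?thesis using Enonpos that by simp
    qed
    have "E \<tau> - E 0 \<le> 0"
      by (rule has_integral_le[OF Efund[of 0 \<tau>] has_integral_0 le]) (use tau in auto)
    then show ?thesis unfolding E_def using init by simp
  qed
  define P where "P s = s powr p * (norm (x' s))^2" for s
  have Pmono: "P \<tau> \<le> P s" if s: "\<tau> \<le> s" "ereal s < T" for s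
  proof (rule DERIV_nonneg_imp_nondecreasing[OF s(1)])
    fix r assume r: "\<tau> \<le> r" "r \<le> s"
    then have r0: "0 < r" using tau by simp
    have "ereal r \<le> ereal s" using r by simp
    then have rT: "ereal r < T" using s(2) by (rule le_less_trans)
    have "(P has_real_derivative p * r powr (p - 1) * (norm (x' r))^2 + 2 * (x'' r \<bullet> x' r) * r powr p) (at r)"
      unfolding P_def by (rule DERIV_mult[OF has_real_derivative_powr[OF r0] dnorm[OF r0]])
    moreover have "p * r powr (p - 1) * (norm (x' r))^2 + 2 * (x'' r \<bullet> x' r) * r powr p = 2 * r powr p * varphi \<alpha> lam x' r"
      unfolding varphi_eq[OF r0] p_def using r0 by (simp add: powr_diff algebra_simps)
    moreover have "0 \<le> 2 * r powr p * varphi \<alpha> lam x' r" using varpos[OF r0 rT] by simp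
    ultimately show "\<exists>y. (P has_real_derivative y) (at r) \<and> 0 \<le> y" by auto
  qed
  define h where "h t = \<alpha> * (1 - lam) / t powr (p + 1) + \<beta> * \<mu> / t powr p" for t
  define G where "G = norm (g z)"
  define V where "V = \<tau> * (G / (\<alpha> + 1)) * (2 * HT - 1) / HT"
  define Bd where "Bd = (\<alpha> + 1)^2 * HT^2 / (2 * \<mu> * \<tau> powr (p + 2) * (2 * HT - 1)^2)"
  have G0: "G > 0" unfolding G_def using gz by simp
  have V0: "V > 0" unfolding V_def using HT tau G0 alpha_pos by simp
  have Pt: "\<tau> powr p * V^2 \<le> P \<tau>"
  proof -
    have "V \<le> norm (x' \<tau>)" using vel unfolding V_def G_def .
    then have "V^2 \<le> (norm (x' \<tau>))^2" using V0 by (intro power_mono) auto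
    then show ?thesis unfolding P_def by (intro mult_left_mono) auto
  qed
  have Ptpos: "0 < \<tau> powr p * V^2" using V0 tau by simp
  have hc: "continuous_on {\<tau>..} h"
    unfolding h_def using tau by (intro continuous_intros continuous_on_powr') auto
  have hnn: "0 \<le> h t" if "\<tau> \<le> t" for t
    unfolding h_def using that tau lam_range alpha_pos beta_nonneg mu_pos by (intro add_nonneg_nonneg divide_nonneg_nonneg) auto
  have Ibound: "integral {\<tau>..t'} h \<le> Bd" if t': "\<tau> \<le> t'" "ereal t' < T" for t'
  proof -
    have hi: "(h has_integral integral {\<tau>..t'} h) {\<tau>..t'}"
      using integrable_continuous_interval[OF continuous_on_subset[OF hc, of "{\<tau>..t'}"]]
      by (auto simp: has_integral_integral)
    have pw: "P \<tau> * h s \<le> - (g (x s) \<bullet> x' s)" if s: "s \<in> {\<tau>..t'}" for s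
    proof -
      have s0: "0 < s" using s tau by simp
      have "ereal s \<le> ereal t'" using s by simp
      then have sT: "ereal s < T" using t'(2) by (rule le_less_trans)
      define N where "N = (norm (x' s))^2"
      define k where "k = (1 - lam) * \<alpha> / s + \<beta> * \<mu>"
      have k0: "0 \<le> k" unfolding k_def using lam_range alpha_pos beta_nonneg mu_pos s0 by (intro add_nonneg_nonneg) auto
      have sp: "0 < s powr p" using s0 by simp
      have "P \<tau> \<le> s powr p * N" using Pmono[of s] s sT unfolding P_def N_def by simp
      then have PN: "P \<tau> / s powr p \<le> N" using sp by (simp add: divide_le_eq mult.commute)
      have "P \<tau> * h s = k * (P \<tau> / s powr p)"
        unfolding h_def k_def using s0 by (simp add: powr_add field_simps)
      also have "\<dots> \<le> k * N" using PN k0 by (rule mult_left_mono)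
      also have "\<dots> \<le> - (g (x s) \<bullet> x' s)" using K1[OF s0 sT] unfolding k_def N_def .
      finally show ?thesis .
    qed
    have "P \<tau> * integral {\<tau>..t'} h \<le> - (E t' - E \<tau>)"
      by (rule has_integral_le[OF has_integral_mult_right[OF hi] has_integral_neg[OF Efund[of \<tau> t']] pw])
         (use tau t' in auto)
    also have "\<dots> \<le> \<phi> z - \<phi> (x t')" using Etau unfolding E_def by simp
    also have "\<dots> \<le> G^2 / (2 * \<mu>)" using gap unfolding G_def .
    finally have PI: "P \<tau> * integral {\<tau>..t'} h \<le> G^2 / (2 * \<mu>)" .
    have Ppos: "0 < P \<tau>" using Pt Ptpos by linarith
    have "integral {\<tau>..t'} h \<le> G^2 / (2 * \<mu>) / P \<tau>" unfolding pos_le_divide_eq[OF Ppos] using PI by (simp only: mult.commute)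
    also have "\<dots> \<le> G^2 / (2 * \<mu>) / (\<tau> powr p * V^2)"
      using Pt Ptpos mu_pos by (intro divide_left_mono) auto
    also have "\<dots> = Bd"
    proof -
      define R where "R = (\<tau> * (2 * HT - 1) / ((\<alpha> + 1) * HT))^2"
      have Veq: "V = G * (\<tau> * (2 * HT - 1) / ((\<alpha> + 1) * HT))" unfolding V_def by simp
      have V2: "V^2 = G^2 * R" unfolding R_def Veq by (rule power_mult_distrib)
      have R0: "R \<noteq> 0" unfolding R_def using HT tau alpha_pos by simp
      have "G^2 / (2 * \<mu>) / (\<tau> powr p * V^2) = (G^2 * 1) / (G^2 * (2 * \<mu> * \<tau> powr p * R))"
        unfolding V2 by (simp add: mult_ac)
      also have "\<dots> = 1 / (2 * \<mu> * \<tau> powr p * R)" using G0 by (rule_tac mult_divide_mult_cancel_left) simp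
      also have "\<dots> = Bd"
      proof -
        have "\<tau> powr (p + 2) = \<tau> powr p * \<tau>^2" using tau by (simp add: powr_add)
        moreover have "HT \<noteq> 0" "2 * HT - 1 \<noteq> 0" "\<alpha> + 1 \<noteq> 0" using HT alpha_pos by auto
        ultimately show ?thesis unfolding Bd_def R_def using tau mu_pos
          by (simp add: power_divide power_mult_distrib)
      qed
      finally show ?thesis .
    qed
    finally show ?thesis .
  qed
  have hm: "h \<in> borel_measurable borel" unfolding h_def by measurable
  define S where "S = {t. \<tau> \<le> t \<and> ereal t < T}"
  have "(\<integral>\<^sup>+ t \<in> S. ennreal (\<alpha> * (1 - lam) / t powr (p + 1)) \<partial>lborel)
       + (\<integral>\<^sup>+ t \<in> S. ennreal (\<beta> * \<mu> / t powr p) \<partial>lborel)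
       = (\<integral>\<^sup>+ t. ennreal (\<alpha> * (1 - lam) / t powr (p + 1)) * indicator S t + ennreal (\<beta> * \<mu> / t powr p) * indicator S t \<partial>lborel)"
    unfolding S_def by (rule nn_integral_add[symmetric]) measurable
  also have "\<dots> = (\<integral>\<^sup>+ t \<in> S. ennreal (h t) \<partial>lborel)"
  proof (rule nn_integral_cong)
    fix t
    show "ennreal (\<alpha> * (1 - lam) / t powr (p + 1)) * indicator S t + ennreal (\<beta> * \<mu> / t powr p) * indicator S t
        = ennreal (h t) * indicator S t"
    proof (cases "t \<in> S")
      case True
      then have "\<tau> \<le> t" unfolding S_def by simp
      then have "0 \<le> \<alpha> * (1 - lam) / t powr (p + 1)" "0 \<le> \<beta> * \<mu> / t powr p"
        using tau lam_range alpha_pos beta_nonneg mu_pos by auto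
      then show ?thesis using True unfolding h_def by (simp add: ennreal_plus)
    qed simp
  qed
  also have "\<dots> \<le> ennreal Bd"
    unfolding S_def
    by (rule nn_final[OF _ hm hc hnn Ibound]) (use tau T_def in auto)
  finally have final: "(\<integral>\<^sup>+ t \<in> {t. \<tau> \<le> t \<and> ereal t < T}. ennreal (\<alpha> * (1 - lam) / t powr (p + 1)) \<partial>lborel)
       + (\<integral>\<^sup>+ t \<in> {t. \<tau> \<le> t \<and> ereal t < T}. ennreal (\<beta> * \<mu> / t powr p) \<partial>lborel) \<le> ennreal Bd"
    unfolding S_def .
  from final show ?thesis by (simp only: T_def p_def HT_def Bd_def)
qed

end
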